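(* Let $A,B\in\mathbb{R}^{n\times n}$, let $\phi,\psi:\mathbb{R}^n\to\mathbb{R}^n$, and let $\Omega$ be a positive diagonal matrix. Assume there are constants $L_1,L_2>0$ with $\|\phi(u)-\phi(v)\|\le L_1\|u-v\|$ and $\|\psi(u)-\psi(v)\|\le L_2\|u-v\|$ for all $u,v\in\mathbb{R}^n$. Let $A+\Omega B=M-N$ with $M$ nonsingular, and set $$\alpha=\|M^{-1}\|,\quad \beta=\|N\|+L_1+L_2\|\Omega\|,\quad \gamma=\|A-\Omega B\|+L_1+L_2\|\Omega\|.$$ Suppose the VNCP has a solution $x^*$. If $$\alpha(\beta+\gamma)<1\quad\text{and}\quad 0<\tau<\frac{2(1-\alpha\beta)}{1-\alpha\beta+\alpha\gamma},$$ then for every initial pair $(x^0,y^0)\in\mathbb{R}^n\times\mathbb{R}^n$ the sequence $\{x^k\}$ generated by the FPI method converges to $x^*$, and $x^*$ is the unique solution of the VNCP.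
   Context: The vertical nonlinear complementarity problem (VNCP) is: find $x\in\mathbb{R}^n$ such that $u(x):=Ax+\phi(x)\ge 0$, $v(x):=Bx+\psi(x)\ge0$ and $u(x)^Tv(x)=0$ (inequalities componentwise), where $\phi,\psi$ act componentwise, i.e. $(\phi(x))_i=\phi(x_i)$, $(\psi(x))_i=\psi(x_i)$ for scalar functions $\phi,\psi$. For a positive diagonal $\Omega$, $x$ solves the VNCP iff $(A+\Omega B)x=|(A-\Omega B)x+\phi(x)-\Omega\psi(x)|-\phi(x)-\Omega\psi(x)$, where $|\cdot|$ is the componentwise absolute value. The FPI method, with splitting $A+\Omega B=M-N$ ($M$ nonsingular) and parameter $\tau>0$, generates from $(x^0,y^0)$: $$x^{k+1}=M^{-1}\big[Nx^k+y^k-\phi(x^k)-\Omega\psi(x^k)\big],\qquad y^{k+1}=(1-\tau)y^k+\tau\,\big|(A-\Omega B)x^{k+1}+\phi(x^{k+1})-\Omega\psi(x^{k+1})\big|.$$ $\|\cdot\|$ denotes the Euclidean vector norm and the induced spectral matrix norm. *)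

theory Defs
  imports "HOL-Analysis.Analysis"
begin

definition cw :: "(real \<Rightarrow> real) \<Rightarrow> real^'n \<Rightarrow> real^'n" where
  "cw f x = (\<chi> i. f (x $ i))"

definition vabs :: "real^'n \<Rightarrow> real^'n" where
  "vabs x = (\<chi> i. \<bar>x $ i\<bar>)"

definition mnorm :: "real^'n^'m \<Rightarrow> real" where
  "mnorm A = onorm (\<lambda>x. A *v x)"

definition pos_diag :: "real^'n^'n \<Rightarrow> bool" where
  "pos_diag W \<longleftrightarrow> (\<forall>i j. i \<noteq> j \<longrightarrow> W $ i $ j = 0) \<and> (\<forall>i. W $ i $ i > 0)"

definition vncp_sol ::
  "real^'n^'n \<Rightarrow> real^'n^'n \<Rightarrow> (real \<Rightarrow> real) \<Rightarrow> (real \<Rightarrow> real) \<Rightarrow> real^'n \<Rightarrow> bool" where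
  "vncp_sol A B phi psi x \<longleftrightarrow>
     (\<forall>i. (A *v x + cw phi x) $ i \<ge> 0) \<and>
     (\<forall>i. (B *v x + cw psi x) $ i \<ge> 0) \<and>
     (A *v x + cw phi x) \<bullet> (B *v x + cw psi x) = 0"

definition fpi_seq ::
  "real^'n^'n \<Rightarrow> real^'n^'n \<Rightarrow> (real \<Rightarrow> real) \<Rightarrow> (real \<Rightarrow> real) \<Rightarrow> real^'n^'n
   \<Rightarrow> real^'n^'n \<Rightarrow> real^'n^'n \<Rightarrow> real \<Rightarrow> (nat \<Rightarrow> real^'n) \<Rightarrow> (nat \<Rightarrow> real^'n) \<Rightarrow> bool" where
  "fpi_seq A B phi psi W M N \<tau> x y \<longleftrightarrow>
     (\<forall>k. x (Suc k) = matrix_inv M *v (N *v x k + y k - cw phi (x k) - W *v cw psi (x k)) \<and>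
          y (Suc k) = (1 - \<tau>) *\<^sub>R y k
             + \<tau> *\<^sub>R vabs ((A - W ** B) *v x (Suc k) + cw phi (x (Suc k)) - W *v cw psi (x (Suc k))))"

end

theory Submission
  imports Defs
begin

lemma mnorm_bound: "norm (A *v x) \<le> mnorm A * norm (x::real^'n)"
  unfolding mnorm_def by (rule onorm) simp

lemma mnorm_nonneg: "0 \<le> mnorm (A::real^'n^'m)"
  unfolding mnorm_def by (rule onorm_pos_le) simp

lemma vabs_lip: "norm (vabs u - vabs v) \<le> norm (u - (v::real^'n))"
  by (rule norm_le_componentwise_cart) (simp add: vabs_def abs_triangle_ineq3)

lemma matrix_inv_left': "invertible (M::real^'n^'n) \<Longrightarrow> matrix_inv M ** M = mat 1"
  unfolding invertible_def matrix_inv_def by (rule someI2_ex) auto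

lemma two_seq:
  fixes a b :: "nat \<Rightarrow> real" and p q r s :: real
  assumes a0: "\<And>k. a k \<ge> 0" and b0: "\<And>k. b k \<ge> 0"
    and p0: "p \<ge> 0" and q0: "q \<ge> 0" and r0: "r \<ge> 0" and s0: "s \<ge> 0"
    and p1: "p < 1" and key: "q * r < (1 - p) * (1 - s)"
    and ra: "\<And>k. a (Suc k) \<le> p * a k + q * b k"
    and rb: "\<And>k. b (Suc k) \<le> r * a k + s * b k"
  shows "a \<longlonglongrightarrow> 0"
proof -
  have qr0: "q * r \<ge> 0" using q0 r0 by simp
  have s1: "s < 1"
  proof (rule ccontr)
    assume "\<not> s < 1"
    then have "(1 - p) * (1 - s) \<le> 0" using p1 by (simp add: mult_nonneg_nonpos)
    then show False using key qr0 by linarith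
  qed
  define t where "t = q * r / (1 - p)"
  define l where "l = (t + (1 - s)) / 2"
  have qrp: "t < 1 - s" using key p1 unfolding t_def by (simp add: divide_less_eq mult.commute)
  have qrp0: "t \<ge> 0" using qr0 p1 unfolding t_def by simp
  have l0: "l > 0"
  proof -
    have "t + (1 - s) > 0" using s1 qrp0 by linarith
    then show ?thesis unfolding l_def by simp
  qed
  have ls: "l + s < 1" unfolding l_def using qrp by (simp add: field_simps)
  have lp: "q * r < l * (1 - p)"
  proof -
    have "l * (1 - p) = (q * r + (1 - s) * (1 - p)) / 2" using p1 unfolding l_def t_def
      by (simp add: field_simps)
    then show ?thesis using key by (simp add: mult.commute)
  qed
  define \<rho> where "\<rho> = max (p + q * r / l) (l + s)"
  have r1: "p + q * r / l < 1" 
  proof -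
    have "q * r / l < 1 - p" using lp l0 by (simp add: divide_less_eq mult.commute)
    then show ?thesis by simp
  qed
  have \<rho>1: "\<rho> < 1" using r1 ls unfolding \<rho>_def by simp
  have \<rho>0: "\<rho> \<ge> 0" unfolding \<rho>_def using l0 s0 by simp
  define V where "V k = l * a k + q * b k" for k
  have Vstep: "V (Suc k) \<le> \<rho> * V k" for k
  proof -
    have "V (Suc k) \<le> l * (p * a k + q * b k) + q * (r * a k + s * b k)"
      unfolding V_def using ra[of k] rb[of k] l0 q0
      by (intro add_mono mult_left_mono) auto
    also have "\<dots> = (p + q * r / l) * (l * a k) + (l + s) * (q * b k)"
      using l0 by (simp add: field_simps)
    also have "\<dots> \<le> \<rho> * (l * a k) + \<rho> * (q * b k)"
      unfolding \<rho>_def using l0 a0[of k] b0[of k] q0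
      by (intro add_mono mult_right_mono) auto
    finally show ?thesis unfolding V_def by (simp add: algebra_simps)
  qed
  have Vk: "V k \<le> \<rho> ^ k * V 0" for k
  proof (induction k)
    case 0 then show ?case by simp
  next
    case (Suc k)
    have "V (Suc k) \<le> \<rho> * V k" by (rule Vstep)
    also have "\<dots> \<le> \<rho> * (\<rho> ^ k * V 0)" using Suc \<rho>0 by (rule mult_left_mono)
    finally show ?case by simp
  qed
  have lim: "(\<lambda>k. \<rho> ^ k * V 0 / l) \<longlonglongrightarrow> 0"
    using LIMSEQ_power_zero[of \<rho>] \<rho>0 \<rho>1
    by (intro tendsto_divide_zero tendsto_mult_left_zero) simp
  show ?thesis
  proof (rule Lim_null_comparison[OF _ lim])
    show "\<forall>\<^sub>F k in sequentially. norm (a k) \<le> \<rho> ^ k * V 0 / l"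
    proof (rule always_eventually, intro allI)
      fix k
      have "l * a k \<le> V k" unfolding V_def using q0 b0[of k] by simp
      then have "l * a k \<le> \<rho> ^ k * V 0" using Vk[of k] by linarith
      then show "norm (a k) \<le> \<rho> ^ k * V 0 / l" using a0[of k] l0
        by (simp add: le_divide_eq mult.commute)
    qed
  qed
qed


lemma diag_mult:
  assumes W: "pos_diag W"
  shows "(W *v v) $ i = W $ i $ i * v $ i"
proof -
  have "(W *v v) $ i = (\<Sum>j\<in>UNIV. W $ i $ j * v $ j)" by (simp add: matrix_vector_mult_def)
  also have "\<dots> = (\<Sum>j\<in>UNIV. if j = i then W $ i $ i * v $ i else 0)"
    using W unfolding pos_diag_def by (intro sum.cong) auto
  finally show ?thesis by simp
qed

lemma sol_vabs:
  fixes A B W :: "real^'n^'n"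
  assumes W: "pos_diag W" and sol: "vncp_sol A B phi psi z"
  shows "vabs ((A - W ** B) *v z + cw phi z - W *v cw psi z)
           = (A + W ** B) *v z + cw phi z + W *v cw psi z"
proof -
  define u where "u = A *v z + cw phi z"
  define v where "v = B *v z + cw psi z"
  have u0: "\<And>i. u $ i \<ge> 0" and v0: "\<And>i. v $ i \<ge> 0" and uv: "u \<bullet> v = 0"
    using sol unfolding vncp_sol_def u_def v_def by auto
  have uvi: "u $ i * v $ i = 0" for i
  proof -
    have "(\<Sum>j\<in>UNIV. u $ j * v $ j) = 0" using uv by (simp add: inner_vec_def)
    then have "\<forall>j\<in>UNIV. u $ j * v $ j = 0"
      by (subst (asm) sum_nonneg_eq_0_iff) (auto intro: mult_nonneg_nonneg u0 v0)
    then show ?thesis by simp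
  qed
  have e1: "(A - W ** B) *v z + cw phi z - W *v cw psi z = u - W *v v"
    unfolding u_def v_def
    by (simp add: matrix_vector_mult_diff_rdistrib matrix_vector_mult_add_rdistrib
        matrix_vector_mul_assoc[symmetric] matrix_vector_right_distrib algebra_simps)
  have e2: "(A + W ** B) *v z + cw phi z + W *v cw psi z = u + W *v v"
    unfolding u_def v_def
    by (simp add: matrix_vector_mult_add_rdistrib matrix_vector_mul_assoc[symmetric]
        matrix_vector_right_distrib algebra_simps)
  have "vabs (u - W *v v) = u + W *v v"
  proof (subst vec_eq_iff, intro allI)
    fix i
    have wi: "W $ i $ i > 0" using W unfolding pos_diag_def by auto
    show "vabs (u - W *v v) $ i = (u + W *v v) $ i"
      using uvi[of i] u0[of i] v0[of i] wi
      by (auto simp: vabs_def diag_mult[OF W])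
  qed
  then show ?thesis using e1 e2 by simp
qed

lemma sol_fix:
  fixes A B M N W :: "real^'n^'n"
  assumes W: "pos_diag W" and sol: "vncp_sol A B phi psi z"
    and split: "A + W ** B = M - N" and Minv: "invertible M"
  shows "matrix_inv M *v (N *v z + vabs ((A - W ** B) *v z + cw phi z - W *v cw psi z)
            - cw phi z - W *v cw psi z) = z"
proof -
  have "N *v z + vabs ((A - W ** B) *v z + cw phi z - W *v cw psi z) - cw phi z - W *v cw psi z
        = M *v z"
    unfolding sol_vabs[OF W sol] split
    by (simp add: matrix_vector_mult_diff_rdistrib)
  then show ?thesis
    by (simp add: matrix_vector_mul_assoc matrix_inv_left'[OF Minv])
qed


lemma norm4: "norm (a + b - c - d) \<le> norm a + norm b + norm c + norm (d::'a::real_normed_vector)"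
proof -
  have "norm (a + b - c - d) \<le> norm (a + b - c) + norm d" by (rule norm_triangle_ineq4)
  moreover have "norm (a + b - c) \<le> norm (a + b) + norm c" by (rule norm_triangle_ineq4)
  moreover have "norm (a + b) \<le> norm a + norm b" by (rule norm_triangle_ineq)
  ultimately show ?thesis by linarith
qed

lemma norm3: "norm (a + b - c) \<le> norm a + norm b + norm (c::'a::real_normed_vector)"
  using norm4[of a b c 0] by simp

lemma key_ineq:
  fixes P G \<tau> :: real
  assumes P0: "P \<ge> 0" and G0: "G \<ge> 0" and PG: "P + G < 1" and t0: "0 < \<tau>"
    and tub: "\<tau> < 2 * (1 - P) / (1 - P + G)"
  shows "\<tau> * G * P < (1 - P) * (1 - (\<bar>1 - \<tau>\<bar> + \<tau> * G))"
proof (cases "\<tau> \<le> 1")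
  case True
  then have h: "1 - (\<bar>1 - \<tau>\<bar> + \<tau> * G) = \<tau> * (1 - G)" by (simp add: algebra_simps)
  have "G * P < (1 - P) * (1 - G)" using PG by (simp add: algebra_simps)
  then have "\<tau> * (G * P) < \<tau> * ((1 - P) * (1 - G))" using t0 by (rule mult_strict_left_mono)
  then show ?thesis unfolding h by (simp add: algebra_simps)
next
  case False
  have d: "1 - P + G > 0" using PG G0 by linarith
  have "\<tau> * (1 - P + G) < 2 * (1 - P)" using tub d by (simp add: less_divide_eq)
  moreover have "(1 - P) * (1 - (\<bar>1 - \<tau>\<bar> + \<tau> * G)) = 2 * (1 - P) - \<tau> * (1 - P) * (1 + G)"
    using False by (simp add: algebra_simps)
  ultimately show ?thesis by (simp add: algebra_simps)
qed

lemma conv: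
  fixes A B M N W :: "real^'n^'n" and phi psi :: "real \<Rightarrow> real"
    and L1 L2 \<tau> :: real and z :: "real^'n"
  assumes L1: "L1 > 0" and L2: "L2 > 0"
    and lip_phi: "\<And>u v :: real^'n. norm (cw phi u - cw phi v) \<le> L1 * norm (u - v)"
    and lip_psi: "\<And>u v :: real^'n. norm (cw psi u - cw psi v) \<le> L2 * norm (u - v)"
    and W: "pos_diag W"
    and split: "A + W ** B = M - N" and Minv: "invertible M"
    and sol: "vncp_sol A B phi psi z"
    and cond: "mnorm (matrix_inv M) * ((mnorm N + L1 + L2 * mnorm W) + (mnorm (A - W ** B) + L1 + L2 * mnorm W)) < 1"
    and tau_pos: "0 < \<tau>"
    and tau_ub: "\<tau> < 2 * (1 - mnorm (matrix_inv M) * (mnorm N + L1 + L2 * mnorm W)) /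
                   (1 - mnorm (matrix_inv M) * (mnorm N + L1 + L2 * mnorm W)
                    + mnorm (matrix_inv M) * (mnorm (A - W ** B) + L1 + L2 * mnorm W))"
    and fpi: "fpi_seq A B phi psi W M N \<tau> x y"
  shows "x \<longlonglongrightarrow> z"
proof -
  define \<alpha> where "\<alpha> = mnorm (matrix_inv M)"
  define \<beta> where "\<beta> = mnorm N + L1 + L2 * mnorm W"
  define \<gamma> where "\<gamma> = mnorm (A - W ** B) + L1 + L2 * mnorm W"
  define g where "g w = (A - W ** B) *v w + cw phi w - W *v cw psi w" for w
  define yz where "yz = vabs (g z)"
  define e where "e k = norm (x k - z)" for k
  define f where "f k = norm (y k - yz)" for k
  have a0: "\<alpha> \<ge> 0" unfolding \<alpha>_def by (rule mnorm_nonneg)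
  have b0: "\<beta> \<ge> 0" unfolding \<beta>_def using mnorm_nonneg[of N] mnorm_nonneg[of W] L1 L2 by simp
  have g0: "\<gamma> \<ge> 0" unfolding \<gamma>_def using mnorm_nonneg[of "A - W ** B"] mnorm_nonneg[of W] L1 L2 by simp
  have fixz: "matrix_inv M *v (N *v z + yz - cw phi z - W *v cw psi z) = z"
    unfolding yz_def g_def by (rule sol_fix[OF W sol split Minv])
  have glip: "norm (g u - g v) \<le> \<gamma> * norm (u - v)" for u v
  proof -
    have "g u - g v = (A - W ** B) *v (u - v) + (cw phi u - cw phi v) - W *v (cw psi u - cw psi v)"
      unfolding g_def by (simp add: algebra_simps)
    then have "norm (g u - g v) \<le> norm ((A - W ** B) *v (u - v)) + norm (cw phi u - cw phi v)
        + norm (W *v (cw psi u - cw psi v))"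
      by (simp only: norm3)
    also have "\<dots> \<le> mnorm (A - W ** B) * norm (u - v) + L1 * norm (u - v)
        + mnorm W * (L2 * norm (u - v))"
      using mnorm_bound[of "A - W ** B" "u - v"] lip_phi[of u v]
        order_trans[OF mnorm_bound[of W] mult_left_mono[OF lip_psi mnorm_nonneg]]
      by (intro add_mono) auto
    finally show ?thesis unfolding \<gamma>_def by (simp add: algebra_simps)
  qed
  have xs: "x (Suc k) = matrix_inv M *v (N *v x k + y k - cw phi (x k) - W *v cw psi (x k))"
    and ys: "y (Suc k) = (1 - \<tau>) *\<^sub>R y k + \<tau> *\<^sub>R vabs (g (x (Suc k)))" for k
    using fpi unfolding fpi_seq_def g_def by auto
  have ea: "e (Suc k) \<le> \<alpha> * \<beta> * e k + \<alpha> * f k" for k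
  proof -
    define D where "D = N *v (x k - z) + (y k - yz) - (cw phi (x k) - cw phi z) - W *v (cw psi (x k) - cw psi z)"
    have "x (Suc k) - z = matrix_inv M *v (N *v x k + y k - cw phi (x k) - W *v cw psi (x k))
        - matrix_inv M *v (N *v z + yz - cw phi z - W *v cw psi z)"
      using xs[of k] fixz by simp
    also have "\<dots> = matrix_inv M *v D"
      unfolding D_def by (simp add: algebra_simps)
    finally have "e (Suc k) \<le> \<alpha> * norm D"
      unfolding e_def \<alpha>_def by (simp only: mnorm_bound)
    moreover have "norm D \<le> \<beta> * e k + f k"
    proof -
      have "norm D \<le> norm (N *v (x k - z)) + norm (y k - yz) + norm (cw phi (x k) - cw phi z)
          + norm (W *v (cw psi (x k) - cw psi z))" unfolding D_def by (rule norm4)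
      also have "\<dots> \<le> mnorm N * e k + f k + L1 * e k + mnorm W * (L2 * e k)"
        unfolding e_def f_def
        using mnorm_bound[of N "x k - z"] lip_phi[of "x k" z]
          order_trans[OF mnorm_bound[of W] mult_left_mono[OF lip_psi mnorm_nonneg]]
        by (intro add_mono) auto
      finally show ?thesis unfolding \<beta>_def by (simp add: algebra_simps)
    qed
    ultimately have "e (Suc k) \<le> \<alpha> * (\<beta> * e k + f k)"
      using a0 by (meson mult_left_mono order_trans)
    then show ?thesis by (simp add: algebra_simps)
  qed
  have fb: "f (Suc k) \<le> (\<tau> * \<gamma> * \<alpha> * \<beta>) * e k + (\<bar>1 - \<tau>\<bar> + \<tau> * \<gamma> * \<alpha>) * f k" for k
  proof -
    have "y (Suc k) - yz = (1 - \<tau>) *\<^sub>R (y k - yz) + \<tau> *\<^sub>R (vabs (g (x (Suc k))) - vabs (g z))"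
      using ys[of k] unfolding yz_def by (simp add: algebra_simps)
    then have "f (Suc k) \<le> norm ((1 - \<tau>) *\<^sub>R (y k - yz)) + norm (\<tau> *\<^sub>R (vabs (g (x (Suc k))) - vabs (g z)))"
      unfolding f_def by (simp only: norm_triangle_ineq)
    also have "\<dots> = \<bar>1 - \<tau>\<bar> * f k + \<tau> * norm (vabs (g (x (Suc k))) - vabs (g z))"
      unfolding f_def using tau_pos by simp
    also have "\<dots> \<le> \<bar>1 - \<tau>\<bar> * f k + \<tau> * (\<gamma> * e (Suc k))"
      unfolding e_def using tau_pos order_trans[OF vabs_lip glip]
      by (intro add_mono mult_left_mono) auto
    also have "\<dots> \<le> \<bar>1 - \<tau>\<bar> * f k + \<tau> * (\<gamma> * (\<alpha> * \<beta> * e k + \<alpha> * f k))"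
      using ea[of k] tau_pos g0 by (intro add_mono mult_left_mono) auto
    finally show ?thesis by (simp add: algebra_simps)
  qed
  have key: "\<alpha> * (\<tau> * \<gamma> * \<alpha> * \<beta>) < (1 - \<alpha> * \<beta>) * (1 - (\<bar>1 - \<tau>\<bar> + \<tau> * \<gamma> * \<alpha>))"
  proof -
    have "\<tau> * (\<alpha> * \<gamma>) * (\<alpha> * \<beta>) < (1 - \<alpha> * \<beta>) * (1 - (\<bar>1 - \<tau>\<bar> + \<tau> * (\<alpha> * \<gamma>)))"
    proof (rule key_ineq)
      show "0 \<le> \<alpha> * \<beta>" using a0 b0 by simp
      show "0 \<le> \<alpha> * \<gamma>" using a0 g0 by simp
      have c: "\<alpha> * (\<beta> + \<gamma>) < 1" using cond unfolding \<alpha>_def \<beta>_def \<gamma>_def .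
      then show "\<alpha> * \<beta> + \<alpha> * \<gamma> < 1" by (simp add: distrib_left)
      show "0 < \<tau>" by (rule tau_pos)
      show "\<tau> < 2 * (1 - \<alpha> * \<beta>) / (1 - \<alpha> * \<beta> + \<alpha> * \<gamma>)"
        using tau_ub unfolding \<alpha>_def \<beta>_def \<gamma>_def .
    qed
    then show ?thesis by (simp add: algebra_simps)
  qed
  have p1: "\<alpha> * \<beta> < 1"
  proof -
    have "\<alpha> * \<gamma> \<ge> 0" using a0 g0 by simp
    moreover have "\<alpha> * (\<beta> + \<gamma>) < 1" using cond unfolding \<alpha>_def \<beta>_def \<gamma>_def .
    ultimately show ?thesis by (simp add: distrib_left)
  qed
  have "e \<longlonglongrightarrow> 0"
    by (rule two_seq[of e f "\<alpha> * \<beta>" \<alpha> "\<tau> * \<gamma> * \<alpha> * \<beta>" "\<bar>1 - \<tau>\<bar> + \<tau> * \<gamma> * \<alpha>"])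
      (use ea fb key p1 a0 b0 g0 tau_pos in \<open>auto simp: e_def f_def\<close>)
  then have "(\<lambda>k. x k - z) \<longlonglongrightarrow> 0" unfolding e_def by (simp add: tendsto_norm_zero_iff)
  then show ?thesis by (simp add: Lim_null[symmetric])
qed


theorem theorem3p1:
  fixes A B M N W :: "real^'n^'n" and phi psi :: "real \<Rightarrow> real"
    and L1 L2 \<tau> :: real and xs :: "real^'n"
  assumes L1: "L1 > 0" and L2: "L2 > 0"
    and lip_phi: "\<And>u v :: real^'n. norm (cw phi u - cw phi v) \<le> L1 * norm (u - v)"
    and lip_psi: "\<And>u v :: real^'n. norm (cw psi u - cw psi v) \<le> L2 * norm (u - v)"
    and W: "pos_diag W"
    and split: "A + W ** B = M - N" and Minv: "invertible M"
    and sol: "vncp_sol A B phi psi xs"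
    and cond: "mnorm (matrix_inv M) * ((mnorm N + L1 + L2 * mnorm W) + (mnorm (A - W ** B) + L1 + L2 * mnorm W)) < 1"
    and tau_pos: "0 < \<tau>"
    and tau_ub: "\<tau> < 2 * (1 - mnorm (matrix_inv M) * (mnorm N + L1 + L2 * mnorm W)) /
                   (1 - mnorm (matrix_inv M) * (mnorm N + L1 + L2 * mnorm W)
                    + mnorm (matrix_inv M) * (mnorm (A - W ** B) + L1 + L2 * mnorm W))"
  shows "(\<forall>x y. fpi_seq A B phi psi W M N \<tau> x y \<longrightarrow> x \<longlonglongrightarrow> xs)
         \<and> (\<forall>z. vncp_sol A B phi psi z \<longrightarrow> z = xs)"
proof
  show C: "\<forall>x y. fpi_seq A B phi psi W M N \<tau> x y \<longrightarrow> x \<longlonglongrightarrow> xs"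
    using conv[OF L1 L2 lip_phi lip_psi W split Minv sol cond tau_pos tau_ub] by blast
  show "\<forall>z. vncp_sol A B phi psi z \<longrightarrow> z = xs"
  proof (intro allI impI)
    fix z assume solz: "vncp_sol A B phi psi z"
    define yz where "yz = vabs ((A - W ** B) *v z + cw phi z - W *v cw psi z)"
    have fz: "matrix_inv M *v (N *v z + yz - cw phi z - W *v cw psi z) = z"
      unfolding yz_def by (rule sol_fix[OF W solz split Minv])
    have "fpi_seq A B phi psi W M N \<tau> (\<lambda>_. z) (\<lambda>_. yz)"
      unfolding fpi_seq_def using fz by (simp add: yz_def algebra_simps)
    then have "(\<lambda>_. z) \<longlonglongrightarrow> xs" using C by blast
    then show "z = xs" using LIMSEQ_unique[OF tendsto_const] by blast
  qed
qed

end
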